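(* For every integer $n\ge1$ there exists an infinite word $w_n$ over an alphabet $\Sigma_n$ of $2n$ letters with $\mathrm{ACE}(w_n) = 1$ such that $\mathrm{ACE}_{\mathcal{I}}(w_n)\ge n$, where $\mathrm{ACE}_{\mathcal{I}}$ is taken with $\Sigma=\Sigma_n$ and $\Gamma$ any finite alphabet with at least two letters.
   Context: $\mathrm{Fact}_n(w)$ is the set of length-$n$ factors of $w$. For a nonempty word $v$ and integer $p\ge0$, $v^{p/|v|}$ is the prefix of length $p$ of $vvv\cdots$. For a nonempty finite word $u$, $\mathrm{E}(u) = \sup\{ r \in \mathbb{Q} : u = v^r \text{ for some nonempty } v\}$. For an infinite word $w$, $\mathrm{ACE}(w) = \limsup_{m\to\infty}\sup\{\mathrm{E}(u) : u\in\mathrm{Fact}_m(w)\}$. $\mathcal{I}$ is the set of injective morphisms $\Sigma^*\to\Gamma^*$ and $\mathrm{ACE}_{\mathcal{I}}(w) = \sup\{\mathrm{ACE}(h(w)) : h\in\mathcal{I}\}$. *)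

theory Defs
  imports Main "HOL-Library.Extended_Real" "HOL-Library.Liminf_Limsup"
begin

definition Fact :: "nat \<Rightarrow> (nat \<Rightarrow> 'a) \<Rightarrow> 'a list set" where
  "Fact n w = {map (\<lambda>j. w (i + j)) [0..<n] | i. True}"

text \<open>v^(p/|v|): prefix of length p of vvv...\<close>
definition frac_pow :: "'a list \<Rightarrow> nat \<Rightarrow> 'a list" where
  "frac_pow v p = take p (concat (replicate p v))"

definition Exp :: "'a list \<Rightarrow> real" where
  "Exp u = Sup {r. \<exists>v p. v \<noteq> [] \<and> r = real p / real (length v) \<and> u = frac_pow v p}"

definition ACE :: "(nat \<Rightarrow> 'a) \<Rightarrow> ereal" where
  "ACE w = limsup (\<lambda>m. SUP u \<in> Fact m w. ereal (Exp u))"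

definition morph :: "('a \<Rightarrow> 'b list) \<Rightarrow> 'a list \<Rightarrow> 'b list" where
  "morph f u = concat (map f u)"

text \<open>The image h(w) of an infinite word under a nonerasing morphism:
  its i-th letter is the i-th letter of h(w_0 ... w_i).\<close>
definition morph_inf :: "('a \<Rightarrow> 'b list) \<Rightarrow> (nat \<Rightarrow> 'a) \<Rightarrow> nat \<Rightarrow> 'b" where
  "morph_inf f w i = morph f (map w [0..<Suc i]) ! i"

definition inj_morphs :: "'a set \<Rightarrow> 'b set \<Rightarrow> ('a \<Rightarrow> 'b list) set" where
  "inj_morphs \<Sigma> \<Gamma> = {f. (\<forall>a\<in>\<Sigma>. set (f a) \<subseteq> \<Gamma>) \<and> inj_on (morph f) (lists \<Sigma>)}"

definition ACE_I :: "'a set \<Rightarrow> 'b set \<Rightarrow> (nat \<Rightarrow> 'a) \<Rightarrow> ereal" where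
  "ACE_I \<Sigma> \<Gamma> w = (SUP f \<in> inj_morphs \<Sigma> \<Gamma>. ACE (morph_inf f w))"

end

theory Submission
  imports Defs "HOL-Real_Asymp.Real_Asymp"
begin


definition jp :: "nat \<Rightarrow> nat" where "jp p = (LEAST j. p < 2^j)"
definition EE :: "nat \<Rightarrow> nat" where "EE p = 3 + 4 * jp p"

lemma jp_ex: "p < 2^(jp p)"
  unfolding jp_def by (rule LeastI_ex) (use less_exp in blast)

lemma jp_mono: "p \<le> p' \<Longrightarrow> jp p \<le> jp p'"
  unfolding jp_def by (rule Least_le) (use jp_ex[of p', unfolded jp_def] in auto)

lemma EE_mono: "p \<le> p' \<Longrightarrow> EE p \<le> EE p'"
  using jp_mono unfolding EE_def by auto

lemma jp_pos: "1 \<le> p \<Longrightarrow> 1 \<le> jp p"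
  using jp_ex[of p] by (cases "jp p") auto

lemma jp_low: "1 \<le> p \<Longrightarrow> 2^(jp p - 1) \<le> p"
proof -
  assume p: "1 \<le> p"
  have "jp p - 1 < jp p" using jp_pos[OF p] by simp
  hence "\<not> p < 2^(jp p - 1)" unfolding jp_def by (rule not_less_Least)
  thus ?thesis by simp
qed

lemma jp_sq: "p * (p+1) \<le> 4 ^ jp p"
proof -
  have "p + 1 \<le> 2 ^ jp p" "p \<le> 2 ^ jp p" using jp_ex[of p] by auto
  hence "p * (p+1) \<le> 2^jp p * 2^jp p" by (intro mult_le_mono)
  also have "\<dots> = 4 ^ jp p" by (simp add: power_mult_distrib[symmetric])
  finally show ?thesis .
qed

lemma EE_term: "1 \<le> p \<Longrightarrow> (2/3::real)^(EE p - 1) \<le> (4/9) / (real p * (real p + 1))"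
proof -
  assume p: "1 \<le> p"
  have "(2/3::real)^(EE p - 1) = (4/9) * ((2/3)^4)^(jp p)"
    unfolding EE_def by (simp add: power_add power_mult[symmetric])
  also have "\<dots> \<le> (4/9) * (1/4)^(jp p)"
  proof -
    have "(2/3::real)^4 = 16/81" by (simp add: eval_nat_numeral)
    hence "(2/3::real)^4 \<le> 1/4" by simp
    thus ?thesis by (intro mult_left_mono power_mono) auto
  qed
  also have "\<dots> = (4/9) / 4^(jp p)" by (simp add: power_divide)
  also have "\<dots> \<le> (4/9) / (real p * (real p + 1))"
  proof -
    have "real (p*(p+1)) \<le> real (4 ^ jp p)" using jp_sq[of p] of_nat_le_iff by blast
    hence "real p * (real p + 1) \<le> 4 ^ jp p" by (simp add: algebra_simps)
    moreover have "0 < real p * (real p + 1)" using p by simp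
    ultimately show ?thesis by (intro divide_left_mono) auto
  qed
  finally show ?thesis .
qed

lemma telesc: "(\<Sum>p\<in>{1..M}. 1 / (real p * (real p + 1))) = 1 - 1 / (real M + 1)"
proof (induction M)
  case 0 then show ?case by simp
next
  case (Suc M)
  have "{1..Suc M} = insert (Suc M) {1..M}" by auto
  hence "(\<Sum>p\<in>{1..Suc M}. 1 / (real p * (real p + 1))) = 1 / (real (Suc M) * (real (Suc M) + 1)) + (\<Sum>p\<in>{1..M}. 1 / (real p * (real p + 1)))"
    by simp
  also have "\<dots> = 1 / (real (Suc M) * (real (Suc M) + 1)) + (1 - 1 / (real M + 1))" using Suc.IH by simp
  also have "\<dots> = 1 - 1 / (real (Suc M) + 1)"
  proof -
    define m where "m = real M"
    have m0: "0 \<le> m" unfolding m_def by simp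
    have "1/((m+1)*(m+2)) = 1/(m+1) - 1/(m+2)" using m0 by (simp add: field_simps)
    moreover have "real (Suc M) = m + 1" "real M = m" unfolding m_def by simp_all
    ultimately show ?thesis by (simp add: add.commute)
  qed
  finally show ?case .
qed

lemma EE_sum: "(\<Sum>p\<in>{1..M}. (2/3::real)^(EE p - 1)) \<le> 4/9"
proof -
  have "(\<Sum>p\<in>{1..M}. (2/3::real)^(EE p - 1)) \<le> (\<Sum>p\<in>{1..M}. (4/9) * (1 / (real p * (real p + 1))))"
    by (intro sum_mono) (use EE_term in auto)
  also have "\<dots> = (4/9) * (\<Sum>p\<in>{1..M}. 1 / (real p * (real p + 1)))" by (rule sum_distrib_left[symmetric])
  also have "\<dots> = (4/9) * (1 - 1 / (real M + 1))" by (simp only: telesc)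
  also have "\<dots> \<le> 4/9" by simp
  finally show ?thesis .
qed

lemma EE_small: "(\<lambda>p. (14 + 8 * log 2 (real p)) / real p) \<longlonglongrightarrow> 0"
  by real_asymp

lemma EE_log: "1 \<le> p \<Longrightarrow> real (2 * EE p) \<le> 14 + 8 * log 2 (real p)"
proof -
  assume p: "1 \<le> p"
  have "real (jp p - 1) \<le> log 2 (real p)" using le_log2_of_power[OF jp_low[OF p]] by simp
  hence "real (jp p) \<le> log 2 (real p) + 1" using jp_pos[OF p] by linarith
  thus ?thesis unfolding EE_def by simp
qed

lemma EE_eventually: "0 < (e::real) \<Longrightarrow> \<exists>p0\<ge>1. \<forall>p\<ge>p0. real (2 * EE p) \<le> e * real p"
proof -
  assume e: "0 < e"
  from order_tendstoD(2)[OF EE_small e] obtain N where N: "\<forall>p\<ge>N. (14 + 8 * log 2 (real p)) / real p < e"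
    unfolding eventually_at_top_linorder by auto
  show ?thesis
  proof (intro exI[of _ "max 1 N"] conjI allI impI)
    fix p assume "max 1 N \<le> p"
    hence p: "1 \<le> p" "N \<le> p" by auto
    have "(14 + 8 * log 2 (real p)) < e * real p" using N p by (simp add: divide_less_eq)
    thus "real (2 * EE p) \<le> e * real p" using EE_log[OF p(1)] by linarith
  qed simp
qed


definition good :: "bool list \<Rightarrow> bool" where
  "good u \<longleftrightarrow> (\<forall>i p. 1 \<le> p \<longrightarrow> i + p + EE p \<le> length u \<longrightarrow> \<not>(\<forall>t<EE p. u!(i+t) = u!(i+p+t)))"

definition GG :: "nat \<Rightarrow> bool list set" where "GG N = {u. length u = N \<and> good u}"

lemma good_take: assumes "good u" shows "good (take k u)"
  unfolding good_def
proof (intro allI impI notI)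
  fix i p assume p: "1 \<le> p" "i + p + EE p \<le> length (take k u)"
    and r: "\<forall>t<EE p. take k u ! (i + t) = take k u ! (i + p + t)"
  have "\<forall>t<EE p. u ! (i + t) = u ! (i + p + t)"
  proof (intro allI impI)
    fix t assume t: "t < EE p"
    have "i + p + t < length (take k u)" using t p by simp
    hence "i + t < min (length u) k" "i + p + t < min (length u) k" by auto
    thus "u ! (i + t) = u ! (i + p + t)" using r t by (metis nth_take min_less_iff_conj)
  qed
  moreover have "i + p + EE p \<le> length u" using p by simp
  ultimately show False using assms p(1) unfolding good_def by blast
qed

lemma good_Nil: "good []"
  unfolding good_def by (auto simp: EE_def)

lemma finite_GG: "finite (GG N)"
proof -
  have "GG N \<subseteq> {u. set u \<subseteq> UNIV \<and> length u = N}" unfolding GG_def by auto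
  thus ?thesis using finite_lists_length_eq[of "UNIV :: bool set" N] finite_subset by auto
qed

lemma good_snoc:
  assumes "good u" "\<not> good (u @ [c])"
  shows "\<exists>p. 1 \<le> p \<and> p + EE p \<le> Suc (length u) \<and>
     (\<forall>t<EE p. (u@[c])!(Suc (length u) - EE p - p + t) = (u@[c])!(Suc (length u) - EE p + t))"
proof -
  from assms(2) obtain i p where ip: "1 \<le> p" "i + p + EE p \<le> Suc (length u)"
    "\<forall>t<EE p. (u@[c])!(i+t) = (u@[c])!(i+p+t)" unfolding good_def by auto
  show ?thesis
  proof (cases "i + p + EE p = Suc (length u)")
    case True
    hence "i = Suc (length u) - EE p - p" "i + p = Suc (length u) - EE p" by auto
    thus ?thesis using ip True by (intro exI[of _ p]) auto
  next
    case False
    hence le: "i + p + EE p \<le> length u" using ip by simp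
    have "\<forall>t<EE p. u!(i+t) = u!(i+p+t)"
    proof (intro allI impI)
      fix t assume t: "t < EE p"
      have idx: "i + t < length u" "i + p + t < length u" using le t by auto
      have "(u@[c])!(i+t) = (u@[c])!(i+p+t)" using ip(3) t by blast
      thus "u!(i+t) = u!(i+p+t)" using idx by (simp add: nth_append)
    qed
    thus ?thesis using assms(1) ip(1) le unfolding good_def by blast
  qed
qed

lemma suffix_det:
  assumes "length v = L" "length v' = L" "m + e = L" "1 \<le> p" "p \<le> m"
    "take m v = take m v'"
    "\<forall>t<e. v!(m - p + t) = v!(m + t)" "\<forall>t<e. v'!(m - p + t) = v'!(m + t)"
  shows "v = v'"
proof (rule nth_equalityI)
  show "length v = length v'" using assms by simp
  have "\<forall>k<L. v!k = v'!k"
  proof (intro allI)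
    fix k show "k < L \<longrightarrow> v!k = v'!k"
    proof (induction k rule: less_induct)
      case (less k)
      show ?case
      proof
        assume k: "k < L"
        show "v!k = v'!k"
        proof (cases "k < m")
          case True
          thus ?thesis using assms(6) by (metis nth_take)
        next
          case False
          define t where "t = k - m"
          have t: "t < e" "k = m + t" using False k assms(3) unfolding t_def by auto
          have "v!k = v!(m - p + t)" using assms(7) t by simp
          also have "\<dots> = v'!(m - p + t)"
            using less.IH[of "m - p + t"] t k assms(4,5) by auto
          also have "\<dots> = v'!k" using assms(8) t by simp
          finally show ?thesis .
        qed
      qed
    qed
  qed
  thus "\<And>k. k < length v \<Longrightarrow> v!k = v'!k" using assms(1) by auto
qed


definition BB :: "nat \<Rightarrow> nat \<Rightarrow> bool list set" where
  "BB N p = {v. length v = Suc N \<and> good (take (Suc N - EE p) v) \<and> p + EE p \<le> Suc N \<and>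
      (\<forall>t<EE p. v!(Suc N - EE p - p + t) = v!(Suc N - EE p + t))}"

lemma finite_len: "finite {v :: bool list. length v = L}"
  using finite_lists_length_eq[of "UNIV :: bool set" L] by simp

lemma card_BB: "1 \<le> p \<Longrightarrow> card (BB N p) \<le> (if p + EE p \<le> Suc N then card (GG (Suc N - EE p)) else 0)"
proof (cases "p + EE p \<le> Suc N")
  case False
  hence "BB N p = {}" unfolding BB_def by auto
  thus ?thesis by simp
next
  case True
  assume p: "1 \<le> p"
  have "inj_on (take (Suc N - EE p)) (BB N p)"
  proof (rule inj_onI)
    fix v v' assume "v \<in> BB N p" "v' \<in> BB N p" "take (Suc N - EE p) v = take (Suc N - EE p) v'"
    thus "v = v'"
      using suffix_det[of v "Suc N" v' "Suc N - EE p" "EE p" p] p True unfolding BB_def by auto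
  qed
  moreover have "take (Suc N - EE p) ` BB N p \<subseteq> GG (Suc N - EE p)"
    unfolding BB_def GG_def by auto
  ultimately have "card (BB N p) \<le> card (GG (Suc N - EE p))"
    using card_inj_on_le finite_GG by blast
  thus ?thesis using True by simp
qed

lemma card_step: "2 * card (GG N) \<le> card (GG (Suc N)) +
   (\<Sum>p\<in>{1..Suc N}. if p + EE p \<le> Suc N then card (GG (Suc N - EE p)) else 0)"
proof -
  define ext where "ext = (\<lambda>(u,c). u @ [c]) ` (GG N \<times> (UNIV :: bool set))"
  have "inj_on (\<lambda>(u,c). u @ [c]) (GG N \<times> (UNIV :: bool set))"
    by (rule inj_onI) auto
  hence cext: "card ext = 2 * card (GG N)"
    unfolding ext_def by (simp add: card_image card_cartesian_product)
  have sub: "ext \<subseteq> GG (Suc N) \<union> (\<Union>p\<in>{1..Suc N}. BB N p)"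
  proof
    fix v assume "v \<in> ext"
    then obtain u c where uc: "u \<in> GG N" "v = u @ [c]" unfolding ext_def by auto
    show "v \<in> GG (Suc N) \<union> (\<Union>p\<in>{1..Suc N}. BB N p)"
    proof (cases "good v")
      case True thus ?thesis using uc unfolding GG_def by auto
    next
      case False
      have gu: "good u" "length u = N" using uc unfolding GG_def by auto
      from good_snoc[OF gu(1), of c] False uc obtain p where p: "1 \<le> p" "p + EE p \<le> Suc N"
        "\<forall>t<EE p. (u@[c])!(Suc N - EE p - p + t) = (u@[c])!(Suc N - EE p + t)"
        using gu by auto
      have "take (Suc N - EE p) v = take (Suc N - EE p) u" using uc p gu by (simp add: EE_def)
      hence "good (take (Suc N - EE p) v)" using good_take[OF gu(1)] by simp
      hence "v \<in> BB N p" using p uc gu unfolding BB_def by auto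
      moreover have "p \<in> {1..Suc N}" using p by auto
      ultimately show ?thesis by blast
    qed
  qed
  have fin: "finite (GG (Suc N) \<union> (\<Union>p\<in>{1..Suc N}. BB N p))"
  proof -
    have "GG (Suc N) \<union> (\<Union>p\<in>{1..Suc N}. BB N p) \<subseteq> {v. length v = Suc N}"
      unfolding GG_def BB_def by auto
    thus ?thesis using finite_len finite_subset by blast
  qed
  have "card ext \<le> card (GG (Suc N) \<union> (\<Union>p\<in>{1..Suc N}. BB N p))"
    by (rule card_mono[OF fin sub])
  also have "\<dots> \<le> card (GG (Suc N)) + card (\<Union>p\<in>{1..Suc N}. BB N p)" by (rule card_Un_le)
  also have "card (\<Union>p\<in>{1..Suc N}. BB N p) \<le> (\<Sum>p\<in>{1..Suc N}. card (BB N p))"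
    by (rule card_UN_le) simp
  also have "\<dots> \<le> (\<Sum>p\<in>{1..Suc N}. if p + EE p \<le> Suc N then card (GG (Suc N - EE p)) else 0)"
    by (rule sum_mono) (use card_BB in auto)
  finally show ?thesis using cext by simp
qed

definition aa :: "nat \<Rightarrow> real" where "aa N = real (card (GG N))"

lemma step_real:
  assumes "\<forall>m\<le>N. aa m \<le> (2/3)^(N-m) * aa N"
  shows "3/2 * aa N \<le> aa (Suc N)"
proof -
  have a0: "0 \<le> aa N" unfolding aa_def by simp
  have "2 * aa N \<le> aa (Suc N) + (\<Sum>p\<in>{1..Suc N}. real (if p + EE p \<le> Suc N then card (GG (Suc N - EE p)) else 0))"
  proof -
    have "real (2 * card (GG N)) \<le> real (card (GG (Suc N)) +
     (\<Sum>p\<in>{1..Suc N}. if p + EE p \<le> Suc N then card (GG (Suc N - EE p)) else 0))"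
      using card_step[of N] by (simp only: of_nat_le_iff)
    thus ?thesis unfolding aa_def by (simp only: of_nat_add of_nat_sum of_nat_mult)
  qed
  also have "(\<Sum>p\<in>{1..Suc N}. real (if p + EE p \<le> Suc N then card (GG (Suc N - EE p)) else 0))
      \<le> (\<Sum>p\<in>{1..Suc N}. (2/3)^(EE p - 1) * aa N)"
  proof (rule sum_mono)
    fix p assume "p \<in> {1..Suc N}"
    show "real (if p + EE p \<le> Suc N then card (GG (Suc N - EE p)) else 0) \<le> (2/3)^(EE p - 1) * aa N"
    proof (cases "p + EE p \<le> Suc N")
      case True
      have e1: "1 \<le> EE p" unfolding EE_def by simp
      have "Suc N - EE p \<le> N" "N - (Suc N - EE p) = EE p - 1" using True e1 by auto
      hence "aa (Suc N - EE p) \<le> (2/3)^(EE p - 1) * aa N" using assms by metis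
      thus ?thesis using True unfolding aa_def by simp
    qed (use a0 in simp)
  qed
  also have "\<dots> = (\<Sum>p\<in>{1..Suc N}. (2/3)^(EE p - 1)) * aa N" by (rule sum_distrib_right[symmetric])
  also have "\<dots> \<le> 4/9 * aa N" using EE_sum[of "Suc N"] a0 by (intro mult_right_mono) auto
  finally show ?thesis using a0 by linarith
qed

lemma decay: "\<forall>m\<le>N. aa m \<le> (2/3)^(N-m) * aa N"
proof (induction N)
  case 0 then show ?case by simp
next
  case (Suc N)
  have st: "3/2 * aa N \<le> aa (Suc N)" using step_real[OF Suc] .
  show ?case
  proof (intro allI impI)
    fix m assume m: "m \<le> Suc N"
    show "aa m \<le> (2/3)^(Suc N - m) * aa (Suc N)"
    proof (cases "m = Suc N")
      case True thus ?thesis by simp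
    next
      case False
      hence m': "m \<le> N" using m by simp
      have "aa m \<le> (2/3)^(N-m) * aa N" using Suc m' by blast
      also have "\<dots> \<le> (2/3)^(N-m) * ((2/3) * aa (Suc N))" using st
        by (intro mult_left_mono) auto
      also have "\<dots> = (2/3)^(Suc N - m) * aa (Suc N)" using m' by (simp add: Suc_diff_le)
      finally show ?thesis .
    qed
  qed
qed

lemma GG_nonempty: "1 \<le> aa N"
proof (induction N)
  case 0
  have "GG 0 = {[]}" unfolding GG_def using good_Nil by auto
  thus ?case unfolding aa_def by simp
next
  case (Suc N)
  thus ?case using step_real[OF decay[of N]] by linarith
qed


definition ext_ok :: "bool list \<Rightarrow> bool" where
  "ext_ok u \<longleftrightarrow> (\<forall>N. \<exists>v. good v \<and> N \<le> length v \<and> take (length u) v = u)"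

lemma ext_ok_Nil: "ext_ok []"
  unfolding ext_ok_def
proof
  fix N
  have "1 \<le> real (card (GG N))" using GG_nonempty[of N] unfolding aa_def .
  hence "GG N \<noteq> {}" by auto
  then obtain v where "v \<in> GG N" by auto
  thus "\<exists>v. good v \<and> N \<le> length v \<and> take (length []) v = []" unfolding GG_def by auto
qed

lemma ext_ok_step: "ext_ok u \<Longrightarrow> ext_ok (u@[True]) \<or> ext_ok (u@[False])"
proof (rule ccontr)
  assume u: "ext_ok u" and n: "\<not> (ext_ok (u@[True]) \<or> ext_ok (u@[False]))"
  have "\<not> ext_ok (u@[True])" "\<not> ext_ok (u@[False])" using n by auto
  then obtain N1 N2 where
    N1: "\<forall>v. good v \<and> N1 \<le> length v \<longrightarrow> take (Suc (length u)) v \<noteq> u@[True]" and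
    N2: "\<forall>v. good v \<and> N2 \<le> length v \<longrightarrow> take (Suc (length u)) v \<noteq> u@[False]"
    unfolding ext_ok_def by (metis length_append_singleton)
  from u obtain v where v: "good v" "max N1 N2 + Suc (length u) \<le> length v" "take (length u) v = u"
    unfolding ext_ok_def by blast
  have "take (Suc (length u)) v = u @ [v ! length u]"
    using v by (simp add: take_Suc_conv_app_nth)
  thus False using N1 N2 v by (cases "v ! length u") auto
qed

primrec pre :: "nat \<Rightarrow> bool list" where
  "pre 0 = []"
| "pre (Suc k) = (if ext_ok (pre k @ [True]) then pre k @ [True] else pre k @ [False])"

lemma pre_ok: "ext_ok (pre k) \<and> length (pre k) = k"
proof (induction k)
  case 0 thus ?case using ext_ok_Nil by simp
next
  case (Suc k) thus ?case using ext_ok_step[of "pre k"] by auto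
qed

lemma pre_snoc: "\<exists>c. pre (Suc k) = pre k @ [c]"
  by auto

definition xw :: "nat \<Rightarrow> bool" where "xw i = pre (Suc i) ! i"

lemma pre_map: "pre k = map xw [0..<k]"
proof (induction k)
  case 0 thus ?case by simp
next
  case (Suc k)
  obtain c where c: "pre (Suc k) = pre k @ [c]" using pre_snoc by blast
  have "length (pre k) = k" using pre_ok[of k] by simp
  hence "xw k = c" unfolding xw_def using c by (simp add: nth_append)
  thus ?case using c Suc by simp
qed

lemma pre_good: "good (pre k)"
proof -
  from pre_ok[of k] obtain v where "good v" "take (length (pre k)) v = pre k"
    unfolding ext_ok_def by blast
  thus ?thesis using good_take by metis
qed

lemma xw_prop: "1 \<le> p \<Longrightarrow> (\<forall>t<l. xw (i+t) = xw (i+p+t)) \<Longrightarrow> l < EE p"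
proof (rule ccontr)
  assume p: "1 \<le> p" and r: "\<forall>t<l. xw (i+t) = xw (i+p+t)" and "\<not> l < EE p"
  hence le: "EE p \<le> l" by simp
  define k where "k = i + p + EE p"
  have g: "good (map xw [0..<k])" using pre_good[of k] pre_map[of k] by simp
  have "\<forall>t<EE p. (map xw [0..<k])!(i+t) = (map xw [0..<k])!(i+p+t)"
    using r le unfolding k_def by auto
  thus False using g p unfolding good_def k_def by auto
qed



definition sk :: "nat \<Rightarrow> nat" where "sk k = (\<Sum>r<k. Suc r)"
definition WW :: "nat \<Rightarrow> nat \<Rightarrow> nat" where "WW n k = n * sk k"
definition rnd :: "nat \<Rightarrow> nat \<Rightarrow> nat" where "rnd n q = (LEAST k. q < WW n (Suc k))"
definition col :: "nat \<Rightarrow> nat \<Rightarrow> nat" where "col n q = (q - WW n (rnd n q)) div Suc (rnd n q)"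
definition mo :: "nat \<Rightarrow> nat \<Rightarrow> nat" where "mo n q = (q - WW n (rnd n q)) mod Suc (rnd n q)"
definition pos :: "nat \<Rightarrow> nat \<Rightarrow> nat" where "pos n q = sk (rnd n q) + mo n q"
definition ww :: "nat \<Rightarrow> (nat \<Rightarrow> bool) \<Rightarrow> nat \<Rightarrow> nat" where
  "ww n x q = 2 * col n q + (if x (pos n q) then 1 else 0)"
definition jump :: "nat \<Rightarrow> nat \<Rightarrow> bool" where "jump n q \<longleftrightarrow> mo n q = 0 \<and> 1 \<le> col n q"

lemma sk_Suc: "sk (Suc k) = sk k + Suc k" unfolding sk_def by simp

lemma sk_mono: "k \<le> k' \<Longrightarrow> sk k \<le> sk k'"
  unfolding sk_def by (rule sum_mono2) auto

lemma sk_ge: "k \<le> sk k"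
  by (induction k) (auto simp: sk_Suc)

lemma WW_Suc: "WW n (Suc k) = WW n k + n * Suc k"
  unfolding WW_def by (simp add: sk_Suc algebra_simps)

lemma WW_mono: "k \<le> k' \<Longrightarrow> WW n k \<le> WW n k'"
  unfolding WW_def using sk_mono by simp

lemma rnd_le: "q < WW n (Suc k) \<Longrightarrow> rnd n q \<le> k"
  unfolding rnd_def by (rule Least_le)

lemma divmod_Suc: "m < Suc k \<Longrightarrow> (i * Suc k + m) div Suc k = i \<and> (i * Suc k + m) mod Suc k = m"
proof
  assume m: "m < Suc k"
  show "(i * Suc k + m) div Suc k = i" using m by (intro div_nat_eqI) (simp_all add: algebra_simps)
  show "(i * Suc k + m) mod Suc k = m" using m by (metis add.commute mod_mult_self1 mod_less)
qed

lemma decode: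
  assumes "i < n" "m < Suc k"
  shows "rnd n (WW n k + i * Suc k + m) = k \<and> col n (WW n k + i * Suc k + m) = i \<and>
         mo n (WW n k + i * Suc k + m) = m"
proof -
  define q where "q = WW n k + i * Suc k + m"
  have "Suc i * Suc k \<le> n * Suc k" using assms by (intro mult_le_mono1) simp
  hence lt: "q < WW n (Suc k)" unfolding q_def WW_Suc using assms by simp
  have r: "rnd n q = k"
    unfolding rnd_def
  proof (rule Least_equality)
    show "q < WW n (Suc k)" by (rule lt)
  next
    fix k' assume "q < WW n (Suc k')"
    show "k \<le> k'"
    proof (rule ccontr)
      assume "\<not> k \<le> k'"
      hence "WW n (Suc k') \<le> WW n k" by (intro WW_mono) simp
      thus False using \<open>q < WW n (Suc k')\<close> unfolding q_def by simp
    qed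
  qed
  have "q - WW n k = i * Suc k + m" unfolding q_def by simp
  thus ?thesis using r assms divmod_Suc[OF assms(2), of i] unfolding q_def[symmetric] col_def mo_def by simp
qed

lemma encode:
  assumes "1 \<le> n"
  shows "q = WW n (rnd n q) + col n q * Suc (rnd n q) + mo n q \<and> col n q < n \<and> mo n q < Suc (rnd n q)"
proof -
  have ex: "q < WW n (Suc q)"
  proof -
    have "Suc q \<le> sk (Suc q)" by (rule sk_ge)
    also have "\<dots> \<le> WW n (Suc q)" unfolding WW_def using assms by simp
    finally show ?thesis by simp
  qed
  define k where "k = rnd n q"
  have up: "q < WW n (Suc k)" unfolding k_def rnd_def by (rule LeastI[of _ q]) (rule ex)
  have lo: "WW n k \<le> q"
  proof (cases k)
    case 0 thus ?thesis by (simp add: WW_def sk_def)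
  next
    case (Suc k0)
    have "k0 < k" using Suc by simp
    hence "\<not> q < WW n (Suc k0)" unfolding k_def rnd_def by (rule not_less_Least)
    thus ?thesis using Suc by simp
  qed
  define o' where "o' = q - WW n k"
  have o: "o' < n * Suc k" using up lo unfolding o'_def WW_Suc by simp
  have c1: "col n q = o' div Suc k" and c2: "mo n q = o' mod Suc k" unfolding col_def mo_def o'_def k_def by simp_all
  have d1: "o' div Suc k < n" using o by (simp add: less_mult_imp_div_less)
  have d2: "o' div Suc k * Suc k + o' mod Suc k = o'" by (rule div_mult_mod_eq)
  have d3: "q = WW n k + o'" unfolding o'_def using lo by simp
  have d4: "o' mod Suc k < Suc k" by simp
  show ?thesis unfolding k_def[symmetric] c1 c2 using d1 d2 d3 d4 by linarith
qed

lemma Suc_cases: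
  assumes n: "1 \<le> n"
  shows "(col n (Suc q) = col n q \<and> mo n (Suc q) = Suc (mo n q) \<and> pos n (Suc q) = Suc (pos n q)) \<or>
         (col n (Suc q) = Suc (col n q) \<and> mo n (Suc q) = 0) \<or>
         (col n (Suc q) = 0 \<and> mo n (Suc q) = 0 \<and> pos n (Suc q) = Suc (pos n q) \<and> col n q = n - 1)"
proof -
  define k i m where "k = rnd n q" "i = col n q" "m = mo n q"
  have e: "q = WW n k + i * Suc k + m" "i < n" "m < Suc k"
    using encode[OF n, of q] unfolding k_i_m_def by auto
  show ?thesis
  proof (cases "m < k")
    case True
    have "Suc q = WW n k + i * Suc k + Suc m" using e by simp
    hence "rnd n (Suc q) = k" "col n (Suc q) = i" "mo n (Suc q) = Suc m"
      using decode[of i n "Suc m" k] e True by auto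
    thus ?thesis unfolding pos_def k_i_m_def by simp
  next
    case False
    hence mk: "m = k" using e by simp
    show ?thesis
    proof (cases "Suc i < n")
      case True
      have "Suc q = WW n k + Suc i * Suc k + 0" using e mk by simp
      hence "col n (Suc q) = Suc i" "mo n (Suc q) = 0"
        using decode[of "Suc i" n 0 k] True by auto
      thus ?thesis unfolding k_i_m_def by simp
    next
      case False
      hence ii: "i = n - 1" using e by simp
      have "Suc i * Suc k = n * Suc k" using ii n by simp
      hence "Suc q = WW n (Suc k) + 0 * Suc (Suc k) + 0" using e mk by (simp add: WW_Suc)
      hence "rnd n (Suc q) = Suc k" "col n (Suc q) = 0" "mo n (Suc q) = 0"
        using decode[of 0 n 0 "Suc k"] n by auto
      hence "pos n (Suc q) = sk (Suc k)" unfolding pos_def by simp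
      moreover have "pos n q = sk k + k" unfolding pos_def using mk k_i_m_def by simp
      moreover have "col n q = n - 1" using ii k_i_m_def by simp
      ultimately show ?thesis using \<open>col n (Suc q) = 0\<close> \<open>mo n (Suc q) = 0\<close> by (simp add: sk_Suc)
    qed
  qed
qed

lemma pos_Suc: "1 \<le> n \<Longrightarrow> \<not> jump n (Suc q) \<Longrightarrow> pos n (Suc q) = Suc (pos n q)"
  using Suc_cases[of n q] unfolding jump_def by auto

lemma jump_iff: "1 \<le> n \<Longrightarrow> jump n (Suc q) \<longleftrightarrow> col n (Suc q) \<noteq> col n q \<and> 1 \<le> col n (Suc q)"
  using Suc_cases[of n q] unfolding jump_def by auto

lemma jump_region:
  assumes n: "1 \<le> n" and j: "jump n Q"
  shows "(\<forall>s. 0 < s \<and> s < Suc (rnd n Q) \<longrightarrow> col n (Q + s) = col n Q) \<and> col n (Q + Suc (rnd n Q)) \<noteq> col n Q"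
proof -
  define k i where "k = rnd n Q" "i = col n Q"
  have e: "Q = WW n k + i * Suc k" "i < n" "1 \<le> i"
    using encode[OF n, of Q] j unfolding k_i_def jump_def by auto
  have A: "\<forall>s. 0 < s \<and> s < Suc k \<longrightarrow> col n (Q + s) = i"
    using decode[of i n _ k] e by auto
  have B: "col n (Q + Suc k) \<noteq> i"
  proof (cases "Suc i < n")
    case True
    have eq: "Q + Suc k = WW n k + Suc i * Suc k + 0" using e by simp
    show ?thesis unfolding eq using decode[of "Suc i" n 0 k] True by simp
  next
    case False
    hence "Suc i = n" using e by simp
    have "Q + Suc k = WW n k + Suc i * Suc k" using e by simp
    also have "\<dots> = WW n (Suc k)" using \<open>Suc i = n\<close> WW_Suc by simp
    finally have eq: "Q + Suc k = WW n (Suc k) + 0 * Suc (Suc k) + 0" by simp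
    show ?thesis unfolding eq using decode[of 0 n 0 "Suc k"] e by simp
  qed
  show ?thesis using A B unfolding k_i_def by simp
qed

lemma rnd_mono: "1 \<le> n \<Longrightarrow> q \<le> q' \<Longrightarrow> rnd n q \<le> rnd n q'"
proof -
  assume n: "1 \<le> n" and qq: "q \<le> q'"
  have "q' < WW n (Suc (rnd n q'))"
  proof -
    have "q' = WW n (rnd n q') + col n q' * Suc (rnd n q') + mo n q'" "col n q' < n" "mo n q' < Suc (rnd n q')"
      using encode[OF n] by auto
    moreover have "Suc (col n q') * Suc (rnd n q') \<le> n * Suc (rnd n q')"
      using calculation(2) by (intro mult_le_mono1) simp
    ultimately show ?thesis by (simp add: WW_Suc)
  qed
  thus ?thesis using qq by (intro rnd_le) simp
qed

lemma same_col:
  assumes n: "1 \<le> n" and qq: "q < q'" and c: "col n q = col n q'"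
  shows "pos n q < pos n q' \<and> pos n q' - pos n q \<le> q' - q"
proof -
  define k i m k' m' where "k = rnd n q" "i = col n q" "m = mo n q" "k' = rnd n q'" "m' = mo n q'"
  have e: "q = WW n k + i * Suc k + m" "m < Suc k" "q' = WW n k' + i * Suc k' + m'" "m' < Suc k'"
    using encode[OF n, of q] encode[OF n, of q'] c unfolding k_i_m_k'_m'_def by auto
  have kk: "k \<le> k'" unfolding k_i_m_k'_m'_def using rnd_mono[OF n] qq by simp
  have p: "pos n q = sk k + m" "pos n q' = sk k' + m'" unfolding pos_def k_i_m_k'_m'_def by simp_all
  show ?thesis
  proof (cases "k = k'")
    case True thus ?thesis using e p qq by simp
  next
    case False
    hence "Suc k \<le> k'" using kk by simp
    hence s1: "sk k + Suc k \<le> sk k'" using sk_mono[of "Suc k" k'] by (simp add: sk_Suc)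
    have s2: "(n-1) * sk k \<le> (n-1) * sk k'" using sk_mono[OF kk] by simp
    have s3: "i * Suc k \<le> i * Suc k'" using kk by simp
    have "n * sk k = (n-1) * sk k + sk k" "n * sk k' = (n-1) * sk k' + sk k'"
      using n by (cases n; simp)+
    thus ?thesis using e p s1 s2 s3 unfolding WW_def by linarith
  qed
qed

lemma ww_eq: "ww n x q = ww n x q' \<longleftrightarrow> col n q = col n q' \<and> x (pos n q) = x (pos n q')"
  unfolding ww_def by (cases "x (pos n q)"; cases "x (pos n q')"; simp; presburger)



lemma segment:
  assumes n: "1 \<le> n" and xp: "\<And>p i l. 1 \<le> p \<Longrightarrow> (\<forall>t<l. x(i+t) = x(i+p+t)) \<Longrightarrow> l < EE p"
    and p: "1 \<le> p" and r: "\<forall>t<l. ww n x (j+t) = ww n x (j+p+t)"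
    and ab: "a < b" "b \<le> l" and nj: "\<forall>t. a < t \<and> t < b \<longrightarrow> \<not> jump n (j+t) \<and> \<not> jump n (j+p+t)"
  shows "b - a < EE p"
proof -
  have ps: "a + s < b \<longrightarrow> pos n (j+a+s) = pos n (j+a) + s \<and> pos n (j+p+a+s) = pos n (j+p+a) + s" for s
  proof (induction s)
    case 0 show ?case by simp
  next
    case (Suc s)
    show ?case
    proof
      assume as: "a + Suc s < b"
      have "\<not> jump n (j + (a + Suc s))" "\<not> jump n (j + p + (a + Suc s))" using nj[rule_format, of "a + Suc s"] as by auto
      hence "\<not> jump n (Suc (j+a+s))" "\<not> jump n (Suc (j+p+a+s))" by (simp_all add: add.assoc)
      hence "pos n (Suc (j+a+s)) = Suc (pos n (j+a+s))" "pos n (Suc (j+p+a+s)) = Suc (pos n (j+p+a+s))"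
        using pos_Suc[OF n] by auto
      thus "pos n (j+a+Suc s) = pos n (j+a) + Suc s \<and> pos n (j+p+a+Suc s) = pos n (j+p+a) + Suc s"
        using Suc as by simp
    qed
  qed
  have "ww n x (j+a) = ww n x (j+p+a)" using r ab by auto
  hence "col n (j+a) = col n (j+p+a)" using ww_eq by blast
  from same_col[OF n _ this] p have sc: "pos n (j+a) < pos n (j+p+a)" "pos n (j+p+a) - pos n (j+a) \<le> p"
    by auto
  define d where "d = pos n (j+p+a) - pos n (j+a)"
  have d: "1 \<le> d" "d \<le> p" using sc unfolding d_def by auto
  have "\<forall>s<b-a. x (pos n (j+a) + s) = x (pos n (j+a) + d + s)"
  proof (intro allI impI)
    fix s assume s: "s < b - a"
    have "ww n x (j+(a+s)) = ww n x (j+p+(a+s))" using r s ab by auto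
    hence "x (pos n (j+a+s)) = x (pos n (j+p+a+s))" using ww_eq by (simp add: add.assoc)
    moreover have "pos n (j+a+s) = pos n (j+a) + s" "pos n (j+p+a+s) = pos n (j+p+a) + s" using ps[of s] s by auto
    moreover have "pos n (j+p+a) = pos n (j+a) + d" using sc unfolding d_def by simp
    ultimately show "x (pos n (j+a) + s) = x (pos n (j+a) + d + s)" by simp
  qed
  hence "b - a < EE d" using xp[OF d(1)] by blast
  also have "\<dots> \<le> EE p" using EE_mono[OF d(2)] .
  finally show ?thesis .
qed

lemma ww_rep:
  assumes n: "1 \<le> n" and xp: "\<And>p i l. 1 \<le> p \<Longrightarrow> (\<forall>t<l. x(i+t) = x(i+p+t)) \<Longrightarrow> l < EE p"
    and p: "1 \<le> p" and r: "\<forall>t<l. ww n x (j+t) = ww n x (j+p+t)"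
  shows "l < 2 * EE p"
proof -
  have ce: "t < l \<Longrightarrow> col n (j+t) = col n (j+p+t)" for t using r ww_eq by blast
  have jj: "0 < t \<Longrightarrow> t < l \<Longrightarrow> jump n (j+t) \<longleftrightarrow> jump n (j+p+t)" for t
  proof -
    assume t: "0 < t" "t < l"
    then obtain t0 where t0: "t = Suc t0" by (cases t) auto
    have "col n (j+t0) = col n (j+p+t0)" by (rule ce) (use t t0 in simp)
    moreover have "col n (j+t) = col n (j+p+t)" by (rule ce[OF t(2)])
    moreover have "j + t = Suc (j + t0)" "j + p + t = Suc (j + p + t0)" using t0 by auto
    ultimately show ?thesis using jump_iff[OF n, of "j+t0"] jump_iff[OF n, of "j+p+t0"] by simp
  qed
  have e0: "0 < EE p" unfolding EE_def by simp
  show ?thesis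
  proof (cases "\<exists>t. 0 < t \<and> t < l \<and> jump n (j+t)")
    case False
    show ?thesis
    proof (cases "0 < l")
      case True
      have "l - 0 < EE p"
        by (rule segment[OF n xp p r True order.refl]) (use False jj in auto)
      thus ?thesis by simp
    qed (use e0 in simp)
  next
    case True
    define t1 where "t1 = (LEAST t. 0 < t \<and> t < l \<and> jump n (j+t))"
    have t1: "0 < t1" "t1 < l" "jump n (j+t1)"
      using LeastI_ex[OF True] unfolding t1_def by auto
    have before: "\<forall>t. 0 < t \<and> t < t1 \<longrightarrow> \<not> jump n (j+t) \<and> \<not> jump n (j+p+t)"
    proof (intro allI impI)
      fix t assume t: "0 < t \<and> t < t1"
      have "\<not> jump n (j+t)" using not_less_Least[of t "\<lambda>t. 0 < t \<and> t < l \<and> jump n (j+t)"] t t1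
        unfolding t1_def by auto
      thus "\<not> jump n (j+t) \<and> \<not> jump n (j+p+t)" using jj t t1 by auto
    qed
    have A: "t1 - 0 < EE p" by (rule segment[OF n xp p r t1(1) less_imp_le[OF t1(2)] before])
    define Q Q' where "Q = j + t1" "Q' = j + p + t1"
    have jQ: "jump n Q" "jump n Q'" using t1 jj unfolding Q_Q'_def by auto
    have cQ: "col n Q = col n Q'" using ce t1 unfolding Q_Q'_def by auto
    define k k' where "k = rnd n Q" "k' = rnd n Q'"
    have eQ: "Q = WW n k + col n Q * Suc k" "Q' = WW n k' + col n Q' * Suc k'"
      using encode[OF n, of Q] encode[OF n, of Q'] jQ unfolding k_k'_def jump_def by auto
    have kk: "k \<noteq> k'"
    proof
      assume "k = k'"
      hence "Q = Q'" using eQ cQ by simp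
      thus False using p unfolding Q_Q'_def by simp
    qed
    have RQ: "(\<forall>s. 0 < s \<and> s < Suc k \<longrightarrow> col n (Q + s) = col n Q) \<and> col n (Q + Suc k) \<noteq> col n Q"
      using jump_region[OF n jQ(1)] unfolding k_k'_def by simp
    have RQ': "(\<forall>s. 0 < s \<and> s < Suc k' \<longrightarrow> col n (Q' + s) = col n Q') \<and> col n (Q' + Suc k') \<noteq> col n Q'"
      using jump_region[OF n jQ(2)] unfolding k_k'_def by simp
    have lim: "l \<le> t1 + Suc k \<and> l \<le> t1 + Suc k'"
    proof (rule ccontr)
      assume "\<not> (l \<le> t1 + Suc k \<and> l \<le> t1 + Suc k')"
      show False
      proof (cases "k < k'")
        case True
        hence "t1 + Suc k < l" using \<open>\<not> (l \<le> t1 + Suc k \<and> l \<le> t1 + Suc k')\<close> by auto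
        hence "col n (Q + Suc k) = col n (Q' + Suc k)" using ce[of "t1 + Suc k"] unfolding Q_Q'_def
          by (simp add: add.assoc)
        moreover have "col n (Q' + Suc k) = col n Q'" using RQ'[THEN conjunct1, rule_format, of "Suc k"] True by simp
        ultimately show False using RQ cQ by simp
      next
        case False
        hence kk': "k' < k" using kk by simp
        hence "t1 + Suc k' < l" using \<open>\<not> (l \<le> t1 + Suc k \<and> l \<le> t1 + Suc k')\<close> by auto
        hence "col n (Q + Suc k') = col n (Q' + Suc k')" using ce[of "t1 + Suc k'"] unfolding Q_Q'_def
          by (simp add: add.assoc)
        moreover have "col n (Q + Suc k') = col n Q" using RQ[THEN conjunct1, rule_format, of "Suc k'"] kk' by simp
        ultimately show False using RQ' cQ by simp
      qed
    qed
    have cols: "t1 \<le> t \<Longrightarrow> t < l \<Longrightarrow> col n (j+t) = col n Q \<and> col n (j+p+t) = col n Q'" for t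
    proof -
      assume tt: "t1 \<le> t" "t < l"
      show ?thesis
      proof (cases "t = t1")
        case True thus ?thesis unfolding Q_Q'_def by simp
      next
        case False
        hence h: "0 < t - t1" "t - t1 < Suc k" "t - t1 < Suc k'" using tt lim by auto
        have e1: "j + t = Q + (t - t1)" "j + p + t = Q' + (t - t1)" using tt unfolding Q_Q'_def by auto
        have "col n (Q + (t - t1)) = col n Q" using RQ[THEN conjunct1, rule_format, of "t - t1"] h by blast
        moreover have "col n (Q' + (t - t1)) = col n Q'" using RQ'[THEN conjunct1, rule_format, of "t - t1"] h by blast
        ultimately show ?thesis unfolding e1 by blast
      qed
    qed
    have after: "\<forall>t. t1 < t \<and> t < l \<longrightarrow> \<not> jump n (j+t) \<and> \<not> jump n (j+p+t)"
    proof (intro allI impI)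
      fix t assume t: "t1 < t \<and> t < l"
      then obtain t0 where t0: "t = Suc t0" "t1 \<le> t0" by (cases t) auto
      have "col n (j+t0) = col n (j+t)" "col n (j+p+t0) = col n (j+p+t)"
        using cols[of t0] cols[of t] t t0 by auto
      moreover have "j + t = Suc (j + t0)" "j + p + t = Suc (j + p + t0)" using t0 by auto
      ultimately show "\<not> jump n (j+t) \<and> \<not> jump n (j+p+t)"
        using jump_iff[OF n, of "j+t0"] jump_iff[OF n, of "j+p+t0"] by simp
    qed
    have B: "l - t1 < EE p" by (rule segment[OF n xp p r t1(2) order.refl after])
    show ?thesis using A B by simp
  qed
qed



lemma concat_uniform_nth:
  "(\<forall>y\<in>set ys. length (f y) = L) \<Longrightarrow> q < L * length ys \<Longrightarrow>
    concat (map f ys) ! q = f (ys ! (q div L)) ! (q mod L)"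
proof (induction ys arbitrary: q)
  case Nil thus ?case by simp
next
  case (Cons y ys)
  have L: "length (f y) = L" using Cons.prems by simp
  have L0: "0 < L" using Cons.prems by (cases L) auto
  show ?case
  proof (cases "q < L")
    case True thus ?thesis using L by (simp add: nth_append)
  next
    case False
    then obtain q' where q': "q = L + q'" by (metis le_add_diff_inverse not_less)
    have "concat (map f (y # ys)) ! q = concat (map f ys) ! q'" using L q' by (simp add: nth_append)
    also have "\<dots> = f (ys ! (q' div L)) ! (q' mod L)"
      using Cons.IH[of q'] Cons.prems q' by simp
    also have "\<dots> = f ((y # ys) ! (q div L)) ! (q mod L)" using q' L0 by simp
    finally show ?thesis .
  qed
qed

lemma frac_pow_len: "v \<noteq> [] \<Longrightarrow> length (frac_pow v p) = p"
proof -
  assume v: "v \<noteq> []"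
  have "p \<le> p * length v" using v by (cases v) auto
  moreover have "length (concat (replicate p v)) = p * length v" by (simp add: length_concat sum_list_replicate)
  ultimately show ?thesis unfolding frac_pow_def by simp
qed

lemma frac_pow_nth: "v \<noteq> [] \<Longrightarrow> t < p \<Longrightarrow> frac_pow v p ! t = v ! (t mod length v)"
proof -
  assume v: "v \<noteq> []" and t: "t < p"
  have tl: "t < length v * length (replicate p v)"
    using t v by (cases "length v") auto
  have "frac_pow v p ! t = concat (map (\<lambda>y. y) (replicate p v)) ! t"
    unfolding frac_pow_def using t by simp
  also have "\<dots> = (replicate p v ! (t div length v)) ! (t mod length v)"
    by (rule concat_uniform_nth[OF _ tl]) simp
  also have "\<dots> = v ! (t mod length v)"
  proof -
    have "t div length v < p" using t by (meson div_le_dividend le_less_trans)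
    thus ?thesis by simp
  qed
  finally show ?thesis .
qed

lemma frac_pow_self: "frac_pow u (length u) = u"
proof (cases "u = []")
  case True thus ?thesis by (simp add: frac_pow_def)
next
  case False
  show ?thesis
    by (rule nth_equalityI) (use False in \<open>simp_all add: frac_pow_len frac_pow_nth\<close>)
qed

lemma Exp_bdd: "bdd_above {r. \<exists>v p. v \<noteq> [] \<and> r = real p / real (length v) \<and> u = frac_pow v p}"
proof (rule bdd_aboveI)
  fix r assume "r \<in> {r. \<exists>v p. v \<noteq> [] \<and> r = real p / real (length v) \<and> u = frac_pow v p}"
  then obtain v p where vp: "v \<noteq> []" "r = real p / real (length v)" "u = frac_pow v p" by auto
  have "p = length u" using vp frac_pow_len by metis
  moreover have "1 \<le> real (length v)" using vp by (cases v) auto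
  hence "real p / real (length v) \<le> real p / 1" by (intro divide_left_mono) auto
  thus "r \<le> real (length u)" using vp(2) \<open>p = length u\<close> by simp
qed

lemma Exp_ge: "v \<noteq> [] \<Longrightarrow> u = frac_pow v (length u) \<Longrightarrow> real (length u) / real (length v) \<le> Exp u"
  unfolding Exp_def by (rule cSup_upper[OF _ Exp_bdd]) auto

lemma Exp_ge1: "u \<noteq> [] \<Longrightarrow> 1 \<le> Exp u"
  using Exp_ge[of u u] frac_pow_self[of u] by simp

lemma Exp_le:
  assumes "u \<noteq> []" "1 \<le> B"
    and h: "\<And>v. v \<noteq> [] \<Longrightarrow> length v < length u \<Longrightarrow> u = frac_pow v (length u) \<Longrightarrow> real (length u) / real (length v) \<le> B"
  shows "Exp u \<le> B"
  unfolding Exp_def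
proof (rule cSup_least)
  have "real (length u) / real (length u) \<in> {r. \<exists>v p. v \<noteq> [] \<and> r = real p / real (length v) \<and> u = frac_pow v p}"
    unfolding mem_Collect_eq by (rule exI[of _ u], rule exI[of _ "length u"]) (simp add: frac_pow_self assms(1))
  thus "{r. \<exists>v p. v \<noteq> [] \<and> r = real p / real (length v) \<and> u = frac_pow v p} \<noteq> {}" by blast
next
  fix r assume "r \<in> {r. \<exists>v p. v \<noteq> [] \<and> r = real p / real (length v) \<and> u = frac_pow v p}"
  then obtain v p where vp: "v \<noteq> []" "r = real p / real (length v)" "u = frac_pow v p" by auto
  have p: "p = length u" using vp frac_pow_len by metis
  show "r \<le> B"
  proof (cases "length v < length u")
    case True
    have uf: "u = frac_pow v (length u)" using vp(3) p by (simp only:)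
    have "real (length u) / real (length v) \<le> B" by (rule h[OF vp(1) True uf])
    thus ?thesis using vp(2) p by (simp only:)
  next
    case False
    hence "real (length u) / real (length v) \<le> 1" using vp by (cases v) (auto simp: divide_le_eq)
    thus ?thesis using vp(2) p assms(2) by (simp only:)
  qed
qed

lemma frac_pow_period:
  assumes "v \<noteq> []" "u = frac_pow v (length u)" "t + length v < length u"
  shows "u ! t = u ! (t + length v)"
proof -
  have "u ! t = v ! (t mod length v)" using frac_pow_nth[OF assms(1), of t "length u"] assms by simp
  moreover have "u ! (t + length v) = v ! ((t + length v) mod length v)"
    using frac_pow_nth[OF assms(1), of "t + length v" "length u"] assms by simp
  ultimately show ?thesis by simp
qed

lemma ACE_ww:
  assumes n: "1 \<le> n" and xp: "\<And>p i l. 1 \<le> p \<Longrightarrow> (\<forall>t<l. x(i+t) = x(i+p+t)) \<Longrightarrow> l < EE p"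
  shows "ACE (ww n x) = 1"
proof (rule antisym)
  define S where "S m = (SUP u \<in> Fact m (ww n x). ereal (Exp u))" for m
  have A: "ACE (ww n x) = (INF N. SUP m\<in>{N..}. S m)" unfolding ACE_def S_def by (rule limsup_INF_SUP)
  show "1 \<le> ACE (ww n x)"
    unfolding A
  proof (rule INF_greatest)
    fix N
    define u where "u = map (\<lambda>j. ww n x (0 + j)) [0..<Suc N]"
    have "u \<in> Fact (Suc N) (ww n x)" unfolding u_def Fact_def by blast
    moreover have "1 \<le> Exp u" by (rule Exp_ge1) (simp add: u_def)
    ultimately have "1 \<le> S (Suc N)" unfolding S_def by (intro SUP_upper2[of u]) auto
    thus "1 \<le> (SUP m\<in>{N..}. S m)" by (intro SUP_upper2[of "Suc N"]) auto
  qed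
  show "ACE (ww n x) \<le> 1"
  proof (rule ereal_le_epsilon2)
    fix e :: real assume e: "0 < e"
    obtain p0 where p0: "1 \<le> p0" "\<forall>p\<ge>p0. real (2 * EE p) \<le> e * real p"
      using EE_eventually[OF e] by auto
    define M where "M = p0 + 2 * EE p0"
    have "\<forall>m\<ge>M. S m \<le> ereal (1 + e)"
    proof (intro allI impI)
      fix m assume m: "M \<le> m"
      show "S m \<le> ereal (1 + e)"
        unfolding S_def
      proof (rule SUP_least)
        fix u assume "u \<in> Fact m (ww n x)"
        then obtain i where u: "u = map (\<lambda>j. ww n x (i + j)) [0..<m]" unfolding Fact_def by auto
        have lu: "length u = m" using u by simp
        have "Exp u \<le> 1 + e"
        proof (rule Exp_le)
          show "u \<noteq> []" using lu m p0 unfolding M_def by auto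
          show "1 \<le> 1 + e" using e by simp
        next
          fix v assume v: "v \<noteq> []" "length v < length u" "u = frac_pow v (length u)"
          define p where "p = length v"
          have p1: "1 \<le> p" using v unfolding p_def by (cases v) auto
          have "\<forall>t<m - p. ww n x (i+t) = ww n x (i+p+t)"
          proof (intro allI impI)
            fix t assume t: "t < m - p"
            have "u ! t = u ! (t + p)" using frac_pow_period[OF v(1) v(3)] t lu unfolding p_def by simp
            moreover have "u ! t = ww n x (i+t)" using t lu by (simp add: u ac_simps)
            moreover have "u ! (t + p) = ww n x (i+p+t)" using t lu by (simp add: u ac_simps)
            ultimately show "ww n x (i+t) = ww n x (i+p+t)" by simp
          qed
          from ww_rep[OF n xp p1 this] have lt: "m - p < 2 * EE p" .
          have pp0: "p0 \<le> p"
          proof (rule ccontr)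
            assume "\<not> p0 \<le> p"
            hence "EE p \<le> EE p0" by (intro EE_mono) simp
            thus False using lt m \<open>\<not> p0 \<le> p\<close> unfolding M_def by linarith
          qed
          have "real m < real p + real (2 * EE p)" using lt by linarith
          also have "\<dots> \<le> real p + e * real p" using p0(2) pp0 by simp
          finally have "real m < (1 + e) * real p" by (simp add: algebra_simps)
          thus "real (length u) / real (length v) \<le> 1 + e"
            using p1 lu unfolding p_def[symmetric] by (simp add: divide_le_eq)
        qed
        thus "ereal (Exp u) \<le> ereal (1 + e)" by simp
      qed
    qed
    hence "(SUP m\<in>{M..}. S m) \<le> ereal (1 + e)" by (intro SUP_least) auto
    hence "(INF N. SUP m\<in>{N..}. S m) \<le> ereal (1 + e)" by (intro INF_lower2[of M]) auto
    moreover have "ereal (1 + e) = 1 + ereal e" by simp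
    ultimately show "ACE (ww n x) \<le> 1 + ereal e" unfolding A by (simp only:)
  qed
qed



definition tc :: "nat \<Rightarrow> nat \<Rightarrow> nat \<Rightarrow> nat list" where
  "tc g e c = (if c = 0 then [e, e] else [e, g])"

definition hh :: "nat \<Rightarrow> nat \<Rightarrow> nat \<Rightarrow> nat \<Rightarrow> nat list" where
  "hh n g e a = replicate (n - 1 - a div 2) g @ tc g e (a mod 2) @ replicate (a div 2) g"

lemma hh_len: "a div 2 < n \<Longrightarrow> length (hh n g e a) = n + 1"
  unfolding hh_def tc_def by auto

lemma hh_nth:
  assumes "i < n" "c < 2" "r < n + 1"
  shows "hh n g e (2*i+c) ! r = (if r < n-1-i \<or> n+1-i \<le> r then g else tc g e c ! (r - (n-1-i)))"
proof -
  have d: "(2*i+c) div 2 = i" "(2*i+c) mod 2 = c" using assms(2) by auto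
  have lt: "length (tc g e c) = 2" unfolding tc_def by simp
  show ?thesis unfolding hh_def d using assms lt by (auto simp: nth_append)
qed

lemma tc0: "tc g e c ! 0 = e" unfolding tc_def by simp
lemma tc1: "tc g e c ! 1 = (if c = 0 then e else g)" unfolding tc_def by simp

lemma hh_inj: assumes "g \<noteq> e" shows "inj_on (hh n g e) {0..<2*n}"
proof (rule inj_onI)
  fix a b assume a: "a \<in> {0..<2*n}" and b: "b \<in> {0..<2*n}" and eq: "hh n g e a = hh n g e b"
  define i c i' c' where "i = a div 2" "c = a mod 2" "i' = b div 2" "c' = b mod 2"
  have ab: "a = 2*i+c" "b = 2*i'+c'" "i < n" "i' < n" "c < 2" "c' < 2"
    using a b unfolding i_c_i'_c'_def by auto
  have f1: "\<not> (n-1-i < n-1-i \<or> n+1-i \<le> n-1-i)" "n-1-i < n+1" using ab by arith+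
  have f2: "\<not> (n-1-i' < n-1-i' \<or> n+1-i' \<le> n-1-i')" "n-1-i' < n+1" using ab by arith+
  have ea: "hh n g e a ! (n-1-i) = e" using hh_nth[of i n c "n-1-i" g e] ab f1 tc0 by simp
  have eb: "hh n g e b ! (n-1-i') = e" using hh_nth[of i' n c' "n-1-i'" g e] ab f2 tc0 by simp
  have ii: "i = i'"
  proof (rule ccontr)
    assume "i \<noteq> i'"
    hence "i < i' \<or> i' < i" by auto
    thus False
    proof
      assume "i < i'"
      hence "n-1-i' < n-1-i" "n-1-i' < n+1" using ab by arith+
      hence "hh n g e a ! (n-1-i') = g" using hh_nth[of i n c "n-1-i'" g e] ab by simp
      thus False using eb eq assms by simp
    next
      assume "i' < i"
      hence "n-1-i < n-1-i'" "n-1-i < n+1" using ab by arith+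
      hence "hh n g e b ! (n-1-i) = g" using hh_nth[of i' n c' "n-1-i" g e] ab by simp
      thus False using ea eq assms by simp
    qed
  qed
  have f3: "\<not> (n-i < n-1-i \<or> n+1-i \<le> n-i)" "n-i < n+1" "n - i - (n-1-i) = 1" using ab by arith+
  have "hh n g e a ! (n-i) = (if c = 0 then e else g)"
    using hh_nth[of i n c "n-i" g e] ab tc1 f3 by simp
  moreover have "hh n g e b ! (n-i) = (if c' = 0 then e else g)"
    using hh_nth[of i' n c' "n-i" g e] ab tc1 ii f3 by simp
  ultimately have "c = c'" using eq assms ab by (auto split: if_splits)
  thus "a = b" using ab ii by simp
qed

lemma morph_len: "(\<forall>a\<in>A. length (h a) = L) \<Longrightarrow> u \<in> lists A \<Longrightarrow> length (morph h u) = L * length u"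
  by (induction u) (auto simp: morph_def)

lemma morph_inj:
  assumes len: "\<forall>a\<in>A. length (h a) = L" and L: "0 < L" and inj: "inj_on h A"
  shows "inj_on (morph h) (lists A)"
proof -
  have main: "set u \<subseteq> A \<Longrightarrow> set v \<subseteq> A \<Longrightarrow> morph h u = morph h v \<Longrightarrow> u = v" for u v
  proof (induction u arbitrary: v)
    case Nil
    have "morph h v = []" using Nil.prems(3) by (simp add: morph_def)
    moreover have "v \<in> lists A" using Nil.prems(2) by (auto simp: in_lists_conv_set)
    ultimately have "L * length v = 0" using morph_len[OF len, of v] by auto
    thus ?case using L by simp
  next
    case (Cons a u)
    have inl: "v \<in> lists A" "a # u \<in> lists A" using Cons.prems by (auto simp: in_lists_conv_set)
    have "L * length v = L * Suc (length u)"
      using morph_len[OF len inl(1)] morph_len[OF len inl(2)] Cons.prems(3) by simp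
    hence "v \<noteq> []" using L by auto
    then obtain b v' where v: "v = b # v'" by (cases v) auto
    have ha: "length (h a) = length (h b)" using len Cons.prems v by auto
    have "h a @ morph h u = h b @ morph h v'" using Cons.prems(3) v by (simp add: morph_def)
    hence hab: "h a = h b" "morph h u = morph h v'" using ha by (auto simp: append_eq_append_conv)
    moreover have "a = b" using hab(1) inj Cons.prems v by (auto dest: inj_onD)
    moreover have "u = v'" using Cons.IH[of v'] Cons.prems v hab(2) by auto
    ultimately show ?case using v by simp
  qed
  show ?thesis by (rule inj_onI) (use main in auto)
qed

lemma morph_inf_uniform:
  assumes w: "\<forall>i. w i \<in> A" and len: "\<forall>a\<in>A. length (h a) = L" and L: "0 < L"
  shows "morph_inf h w q = h (w (q div L)) ! (q mod L)"
proof -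
  have "1 * Suc q \<le> L * Suc q" using L by (intro mult_le_mono1) simp
  hence "q < L * length (map w [0..<Suc q])" by simp
  moreover have "\<forall>y\<in>set (map w [0..<Suc q]). length (h y) = L" using w len by auto
  ultimately have "concat (map h (map w [0..<Suc q])) ! q = h (map w [0..<Suc q] ! (q div L)) ! (q mod L)"
    using concat_uniform_nth by blast
  moreover have "q div L < Suc q" by (meson div_le_dividend le_imp_less_Suc)
  hence "map w [0..<Suc q] ! (q div L) = w (q div L)" by (simp del: upt_Suc)
  ultimately show ?thesis unfolding morph_inf_def morph_def by (simp del: upt_Suc)
qed



lemma divmod_gen: "r < (L::nat) \<Longrightarrow> (L * Q + r) div L = Q \<and> (L * Q + r) mod L = r"
proof
  assume r: "r < L"
  show "(L * Q + r) div L = Q" using r by simp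
  show "(L * Q + r) mod L = r" using r by (metis add.commute mod_less mod_mult_self2)
qed

lemma ww_val: "i < n \<Longrightarrow> m < Suc k \<Longrightarrow> ww n x (WW n k + i * Suc k + m) = 2*i + (if x (sk k + m) then 1 else 0)"
  using decode[of i n m k] unfolding ww_def pos_def by simp

definition GG' :: "nat \<Rightarrow> (nat \<Rightarrow> bool) \<Rightarrow> nat \<Rightarrow> nat \<Rightarrow> nat \<Rightarrow> nat \<Rightarrow> nat" where
  "GG' n x g e k z = (if z mod (n+1) < 2 then tc g e (if x (sk k + z div (n+1)) then 1 else 0) ! (z mod (n+1)) else g)"

lemma hw_G:
  assumes n: "1 \<le> n" and i: "i < n" and z: "z < (n+1) * Suc k - 1"
  shows "hh n g e (ww n x (((n+1) * WW n k + (n-1) + i * ((n+1) * Suc k - 1) + z) div (n+1)))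
           ! (((n+1) * WW n k + (n-1) + i * ((n+1) * Suc k - 1) + z) mod (n+1)) = GG' n x g e k z"
proof -
  define L P q where "L = n + 1" "P = (n+1) * Suc k - 1" "q = (n+1) * WW n k + (n-1) + i * ((n+1) * Suc k - 1) + z"
  define mm r Y N1 where "mm = z div L" "r = z mod L" "Y = n - 1 - i" "N1 = n - 1"
  define W where "W = WW n k"
  have L2: "2 \<le> L" using n unfolding L_P_q_def by simp
  have rL: "r < L" using L2 unfolding mm_r_Y_N1_def by simp
  have e1: "q = L * W + N1 + i * P + z" unfolding L_P_q_def mm_r_Y_N1_def W_def by simp
  have P1: "P + 1 = L * Suc k" unfolding L_P_q_def using n by simp
  have e2: "i * P + i = L * (i * Suc k)" using P1 by (metis add_mult_distrib2 mult.left_commute mult_1_right)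
  have e3: "z = L * mm + r" unfolding mm_r_Y_N1_def by simp
  have e4: "L * (W + i * Suc k + mm) = L * W + L * (i * Suc k) + L * mm" by (simp add: algebra_simps)
  have e5: "Y + i = N1" unfolding mm_r_Y_N1_def using i by simp
  have qeq: "q = L * (W + i * Suc k + mm) + (Y + r)" using e1 e2 e3 e4 e5 by linarith
  have zP: "z < P" using z unfolding L_P_q_def by simp
  have mmk: "mm < Suc k"
  proof -
    have "z < Suc k * L" using zP P1 by (simp add: mult.commute)
    thus ?thesis unfolding mm_r_Y_N1_def by (simp add: less_mult_imp_div_less)
  qed
  have G: "GG' n x g e k z = (if r < 2 then tc g e (if x (sk k + mm) then 1 else 0) ! r else g)"
    unfolding GG'_def mm_r_Y_N1_def L_P_q_def by simp
  have goal: "hh n g e (ww n x (q div L)) ! (q mod L) = (if r < 2 then tc g e (if x (sk k + mm) then 1 else 0) ! r else g)"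
  proof (cases "Y + r < L")
    case True
    have "q div L = W + i * Suc k + mm \<and> q mod L = Y + r" unfolding qeq by (rule divmod_gen[OF True])
    hence dm: "q div L = W + i * Suc k + mm" "q mod L = Y + r" by auto
    have wv: "ww n x (q div L) = 2*i + (if x (sk k + mm) then 1 else 0)"
      unfolding dm W_def using ww_val[OF i mmk] .
    have "hh n g e (2*i + (if x (sk k + mm) then 1 else 0)) ! (Y + r) =
      (if Y + r < n-1-i \<or> n+1-i \<le> Y + r then g else tc g e (if x (sk k + mm) then 1 else 0) ! (Y + r - (n-1-i)))"
      by (rule hh_nth) (use i True in \<open>auto simp: L_P_q_def\<close>)
    moreover have "r < 2 \<Longrightarrow> \<not> (Y + r < n-1-i \<or> n+1-i \<le> Y + r) \<and> Y + r - (n-1-i) = r"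
      unfolding mm_r_Y_N1_def using i by auto
    moreover have "\<not> r < 2 \<Longrightarrow> n+1-i \<le> Y + r"
      unfolding mm_r_Y_N1_def using i by auto
    ultimately show ?thesis unfolding wv dm(2) by auto
  next
    case False
    have r2: "2 \<le> r" "i + 2 \<le> r" using False i unfolding mm_r_Y_N1_def L_P_q_def by auto
    define idx where "idx = Y + r - L"
    have idx: "idx < Y" using rL False unfolding idx_def by simp
    have qeq2: "q = L * (W + i * Suc k + Suc mm) + idx" using qeq False unfolding idx_def by simp
    have idxL: "idx < L" using idx rL unfolding mm_r_Y_N1_def L_P_q_def by simp
    have "q div L = W + i * Suc k + Suc mm \<and> q mod L = idx" unfolding qeq2 by (rule divmod_gen[OF idxL])
    hence dm: "q div L = W + i * Suc k + Suc mm" "q mod L = idx" by auto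
    have "hh n g e (ww n x (q div L)) ! (q mod L) = g"
    proof (cases "Suc mm < Suc k")
      case True
      have wv: "ww n x (q div L) = 2*i + (if x (sk k + Suc mm) then 1 else 0)"
        unfolding dm W_def using ww_val[OF i True] .
      show ?thesis unfolding wv dm(2)
        by (subst hh_nth) (use i idx idxL in \<open>auto simp: mm_r_Y_N1_def L_P_q_def\<close>)
    next
      case False
      hence mk: "mm = k" using mmk by simp
      have rL1: "r < L - 1"
      proof -
        have "L * k + r < L * Suc k - 1" using e3 mk zP unfolding L_P_q_def by simp
        thus ?thesis by simp
      qed
      have i1: "Suc i < n"
      proof (rule ccontr)
        assume "\<not> Suc i < n"
        hence "Y = 0" unfolding mm_r_Y_N1_def by simp
        thus False using \<open>\<not> Y + r < L\<close> rL by simp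
      qed
      have "q div L = W + Suc i * Suc k + 0" using dm mk by simp
      hence wv: "ww n x (q div L) = 2*(Suc i) + (if x (sk k + 0) then 1 else 0)"
        unfolding W_def using ww_val[OF i1, of 0 k x] by simp
      have idx2: "idx < n - 1 - Suc i" using rL1 False r2 unfolding idx_def mm_r_Y_N1_def L_P_q_def
        using \<open>\<not> Y + r < L\<close> unfolding mm_r_Y_N1_def L_P_q_def by linarith
      show ?thesis unfolding wv dm(2)
        by (subst hh_nth) (use i1 idx2 idxL in \<open>auto simp: L_P_q_def\<close>)
    qed
    thus ?thesis using r2 by simp
  qed
  show ?thesis using goal G unfolding L_P_q_def by simp
qed



lemma ACE_hw_ge:
  assumes n: "1 \<le> n"
  shows "ereal (real n) \<le> ACE (\<lambda>q. hh n g e (ww n x (q div (n+1))) ! (q mod (n+1)))"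
proof -
  define hw where "hw = (\<lambda>q. hh n g e (ww n x (q div (n+1))) ! (q mod (n+1)))"
  define S where "S m = (SUP u \<in> Fact m hw. ereal (Exp u))" for m
  have A: "ACE hw = (INF N. SUP m\<in>{N..}. S m)" unfolding ACE_def S_def by (rule limsup_INF_SUP)
  have "ereal (real n) \<le> (INF N. SUP m\<in>{N..}. S m)"
  proof (rule INF_greatest)
    fix N
    define P where "P = (n+1) * Suc N - 1"
    define a where "a = (n+1) * WW n N + (n-1)"
    define u where "u = map (\<lambda>t. hw (a + t)) [0..<n*P]"
    define v where "v = map (GG' n x g e N) [0..<P]"
    have P1: "1 \<le> P" "N \<le> P" unfolding P_def using n by (simp_all add: algebra_simps)
    have v0: "v \<noteq> []" "length v = P" unfolding v_def using P1 by auto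
    have lu: "length u = n * P" unfolding u_def by simp
    have uf: "u = frac_pow v (length u)"
    proof (rule nth_equalityI)
      show "length u = length (frac_pow v (length u))" using frac_pow_len[OF v0(1)] by simp
    next
      fix t assume t: "t < length u"
      hence t': "t < n * P" using lu by simp
      have "frac_pow v (length u) ! t = v ! (t mod P)" using frac_pow_nth[OF v0(1) t] v0 by simp
      also have "\<dots> = GG' n x g e N (t mod P)" unfolding v_def using P1 by simp
      finally have fr: "frac_pow v (length u) ! t = GG' n x g e N (t mod P)" .
      define i z where "i = t div P" "z = t mod P"
      have iz: "i < n" "z < P" "t = i * P + z"
        using t' P1 unfolding i_z_def by (simp_all add: less_mult_imp_div_less)
      have "u ! t = hw (a + t)" unfolding u_def using t' by simp
      also have "\<dots> = hh n g e (ww n x (((n+1) * WW n N + (n-1) + i * ((n+1) * Suc N - 1) + z) div (n+1)))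
           ! (((n+1) * WW n N + (n-1) + i * ((n+1) * Suc N - 1) + z) mod (n+1))"
        unfolding hw_def a_def using iz unfolding P_def by (simp add: add.assoc)
      also have "\<dots> = GG' n x g e N z" by (rule hw_G[OF n iz(1)]) (use iz(2) in \<open>simp add: P_def\<close>)
      finally show "u ! t = frac_pow v (length u) ! t" using fr unfolding i_z_def by simp
    qed
    have "real (length u) / real (length v) \<le> Exp u" by (rule Exp_ge[OF v0(1) uf])
    hence "real n \<le> Exp u" using lu v0 P1 by simp
    moreover have "u \<in> Fact (n*P) hw" unfolding u_def Fact_def by blast
    ultimately have "ereal (real n) \<le> S (n*P)" unfolding S_def by (intro SUP_upper2[of u]) auto
    moreover have "N \<le> n * P" using P1 n by (metis dual_order.trans mult_le_mono1 mult_1)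
    ultimately show "ereal (real n) \<le> (SUP m\<in>{N..}. S m)" by (intro SUP_upper2[of "n*P"]) auto
  qed
  hence "ereal (real n) \<le> ACE hw" using A by simp
  thus ?thesis unfolding hw_def .
qed

theorem theorem24:
  fixes n :: nat
  assumes "n \<ge> 1"
  shows "\<exists>w :: nat \<Rightarrow> nat. range w \<subseteq> {0..<2*n} \<and> ACE w = 1 \<and>
           (\<forall>\<Gamma> :: nat set. finite \<Gamma> \<and> card \<Gamma> \<ge> 2 \<longrightarrow>
              ACE_I {0..<2*n} \<Gamma> w \<ge> ereal (real n))"
proof -
  have n: "1 \<le> n" using assms .
  define w where "w = ww n xw"
  have rng: "\<forall>q. w q \<in> {0..<2*n}"
  proof
    fix q
    have "col n q < n" using encode[OF n, of q] by simp
    thus "w q \<in> {0..<2*n}" unfolding w_def ww_def by auto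
  qed
  have ace: "ACE w = 1" unfolding w_def by (rule ACE_ww[OF n xw_prop]) auto
  have main: "ACE_I {0..<2*n} \<Gamma> w \<ge> ereal (real n)" if G: "finite \<Gamma>" "card \<Gamma> \<ge> 2" for \<Gamma> :: "nat set"
  proof -
    obtain g where g: "g \<in> \<Gamma>" using G by fastforce
    have "card (\<Gamma> - {g}) \<ge> 1" using G g by simp
    hence "\<Gamma> - {g} \<noteq> {}" by (metis card.empty not_one_le_zero)
    then obtain e where e: "e \<in> \<Gamma>" "e \<noteq> g" by blast
    have len: "\<forall>a\<in>{0..<2*n}. length (hh n g e a) = n + 1" using hh_len by auto
    have "hh n g e \<in> inj_morphs {0..<2*n} \<Gamma>"
      unfolding inj_morphs_def
    proof (intro CollectI conjI ballI)
      fix a assume "a \<in> {0..<2*n}"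
      show "set (hh n g e a) \<subseteq> \<Gamma>" unfolding hh_def tc_def using g e by auto
    next
      show "inj_on (morph (hh n g e)) (lists {0..<2*n})"
        by (rule morph_inj[OF len _ hh_inj]) (use e in auto)
    qed
    moreover have "morph_inf (hh n g e) w = (\<lambda>q. hh n g e (ww n xw (q div (n+1))) ! (q mod (n+1)))"
      using morph_inf_uniform[OF rng len] unfolding w_def by auto
    hence "ereal (real n) \<le> ACE (morph_inf (hh n g e) w)" using ACE_hw_ge[OF n, of g e xw] by simp
    ultimately show ?thesis unfolding ACE_I_def by (intro SUP_upper2) auto
  qed
  show ?thesis using rng ace main by blast
qed


end
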